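(* Let $A\in\mathbb{T}^{n\times d}$ and $b\in\mathbb{T}^n$, let $B$ be a tropical basis of the system $A\odot x=b$, and let $j\in[d]\setminus B$ be such that the $j$-th column of $A$ has at least one entry different from $-\infty$. Then there exists a tropical basis $B'\subset B\cup\{j\}$ with $B'\neq B$. Moreover, if the instance $(A,b)$ is nondegenerate, this basis $B'$ is unique.
   Context: $\mathbb{T}=\mathbb{R}\cup\{-\infty\}$, $\oplus=\max$, $\odot=+$, $(A\odot x)_i=\max_j(A_{ij}+x_j)$; conventions $a-(-\infty)=+\infty$ for $a\in\mathbb{T}$. A tropical (feasible) basis of $A\odot x=b$, $x\in\mathbb{T}^d$, is a subset $B\subset[d]$ of cardinality $n$ for which there is a bijection $\phi:[n]\to B$ such that for every $i\in[n]$, $b_i-A_{i\phi(i)}\in\mathbb{T}$ and it is minimal among $b_k-A_{k\phi(i)}$, $k\in[n]$. Such a basis is nondegenerate if for each $i\in[n]$ the minimum $\min_k(b_k-A_{k\phi(i)})$ is a real number attained by a unique $k$. The instance $(A,b)$ is nondegenerate if all its tropical bases are nondegenerate. *)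

theory Defs
  imports "HOL-Library.Extended_Real"
begin

text \<open>Tropical numbers T = R \<union> {-\<infinity>} are modelled as extended reals different from \<infinity>.
  Matrices A are functions nat \<Rightarrow> nat \<Rightarrow> ereal (row index in {..<n}, column index in {..<d}),
  right-hand sides b are functions nat \<Rightarrow> ereal (index in {..<n}).\<close>

definition tsub :: "ereal \<Rightarrow> ereal \<Rightarrow> ereal" where
  "tsub a c = (if c = -\<infinity> then \<infinity> else a - c)"

definition is_tropical :: "ereal \<Rightarrow> bool" where
  "is_tropical x \<longleftrightarrow> x \<noteq> \<infinity>"

definition trop_basis ::
  "nat \<Rightarrow> nat \<Rightarrow> (nat \<Rightarrow> nat \<Rightarrow> ereal) \<Rightarrow> (nat \<Rightarrow> ereal) \<Rightarrow> nat set \<Rightarrow> bool" where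
  "trop_basis n d A b B \<longleftrightarrow>
     B \<subseteq> {..<d} \<and> card B = n \<and>
     (\<exists>\<phi>. bij_betw \<phi> {..<n} B \<and>
        (\<forall>i<n. is_tropical (tsub (b i) (A i (\<phi> i))) \<and>
               (\<forall>k<n. tsub (b i) (A i (\<phi> i)) \<le> tsub (b k) (A k (\<phi> i)))))"

text \<open>Nondegenerate basis: for each i, min_k (b_k - A_{k \<phi>(i)}) is real and attained by a
  unique k. Since \<phi> is a bijection onto B, this is stated for each column index in B.\<close>
definition nondeg_trop_basis ::
  "nat \<Rightarrow> nat \<Rightarrow> (nat \<Rightarrow> nat \<Rightarrow> ereal) \<Rightarrow> (nat \<Rightarrow> ereal) \<Rightarrow> nat set \<Rightarrow> bool" where
  "nondeg_trop_basis n d A b B \<longleftrightarrow>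
     trop_basis n d A b B \<and>
     (\<forall>l\<in>B. \<exists>k<n. (\<exists>r::real. tsub (b k) (A k l) = ereal r) \<and>
                   (\<forall>k'<n. k' \<noteq> k \<longrightarrow> tsub (b k) (A k l) < tsub (b k') (A k' l)))"

definition nondeg_instance ::
  "nat \<Rightarrow> nat \<Rightarrow> (nat \<Rightarrow> nat \<Rightarrow> ereal) \<Rightarrow> (nat \<Rightarrow> ereal) \<Rightarrow> bool" where
  "nondeg_instance n d A b \<longleftrightarrow> (\<forall>B. trop_basis n d A b B \<longrightarrow> nondeg_trop_basis n d A b B)"

end

theory Submission
  imports Defs
begin

lemma tsub_not_inf:
  assumes "b \<noteq> \<infinity>" "a \<noteq> \<infinity>" "a \<noteq> -\<infinity>"
  shows "tsub b a \<noteq> \<infinity>"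
  using assms by (cases b; cases a) (auto simp: tsub_def)

lemma tsub_inf: "tsub b (-\<infinity>) = \<infinity>"
  by (simp add: tsub_def)

definition smin :: "nat \<Rightarrow> (nat \<Rightarrow> nat \<Rightarrow> ereal) \<Rightarrow> (nat \<Rightarrow> ereal) \<Rightarrow> nat \<Rightarrow> nat \<Rightarrow> bool" where
  "smin n A b c k \<longleftrightarrow> k < n \<and> (\<forall>k'<n. k' \<noteq> k \<longrightarrow> tsub (b k) (A k c) < tsub (b k') (A k' c))"

lemma smin_unique: "smin n A b c k \<Longrightarrow> smin n A b c k' \<Longrightarrow> k = k'"
  unfolding smin_def by force

lemma nondeg_smin:
  assumes nd: "nondeg_instance n d A b" and bs: "trop_basis n d A b B"
    and psi: "bij_betw \<psi> {..<n} B"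
    and min: "\<forall>i<n. \<forall>k<n. tsub (b i) (A i (\<psi> i)) \<le> tsub (b k) (A k (\<psi> i))"
    and i: "i < n"
  shows "smin n A b (\<psi> i) i"
proof -
  have "nondeg_trop_basis n d A b B" using nd bs unfolding nondeg_instance_def by blast
  moreover have "\<psi> i \<in> B" using psi i by (auto simp: bij_betw_def)
  ultimately obtain k where k: "k < n" "\<forall>k'<n. k' \<noteq> k \<longrightarrow> tsub (b k) (A k (\<psi> i)) < tsub (b k') (A k' (\<psi> i))"
    unfolding nondeg_trop_basis_def by blast
  have "i = k"
  proof (rule ccontr)
    assume "i \<noteq> k"
    then have "tsub (b k) (A k (\<psi> i)) < tsub (b i) (A i (\<psi> i))" using k i by auto
    moreover have "tsub (b i) (A i (\<psi> i)) \<le> tsub (b k) (A k (\<psi> i))" using min i k by auto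
    ultimately show False by simp
  qed
  then show ?thesis using k unfolding smin_def by auto
qed

lemma uniq_form:
  assumes nd: "nondeg_instance n d A b" and bs: "trop_basis n d A b B"
    and bs': "trop_basis n d A b B'" and sub: "B' \<subseteq> B \<union> {j}" and ne: "B' \<noteq> B"
    and jB: "j \<notin> B"
    and phi: "bij_betw \<phi> {..<n} B"
    and phimin: "\<forall>i<n. \<forall>k<n. tsub (b i) (A i (\<phi> i)) \<le> tsub (b k) (A k (\<phi> i))"
  shows "\<exists>k. smin n A b j k \<and> B' = insert j (B - {\<phi> k})"
proof -
  have finB: "finite B" and cB: "card B = n" using bs unfolding trop_basis_def
    by (auto intro: finite_subset)
  have finB': "finite B'" and cB': "card B' = n" using bs' unfolding trop_basis_def
    by (auto intro: finite_subset)
  have jB': "j \<in> B'"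
  proof (rule ccontr)
    assume "j \<notin> B'"
    then have "B' \<subseteq> B" using sub by auto
    then have "B' = B" using card_subset_eq[OF finB] cB cB' by auto
    then show False using ne by simp
  qed
  obtain \<psi> where psi: "bij_betw \<psi> {..<n} B'"
    and psimin: "\<forall>i<n. \<forall>k<n. tsub (b i) (A i (\<psi> i)) \<le> tsub (b k) (A k (\<psi> i))"
    using bs' unfolding trop_basis_def by blast
  obtain k where k: "k < n" "\<psi> k = j" using psi jB' unfolding bij_betw_def by force
  have sk: "smin n A b j k" using nondeg_smin[OF nd bs' psi psimin k(1)] k by simp
  have notin: "\<phi> k \<notin> B'"
  proof
    assume a: "\<phi> k \<in> B'"
    then obtain i' where i': "i' < n" "\<psi> i' = \<phi> k" using psi unfolding bij_betw_def by force
    have s1: "smin n A b (\<phi> k) i'" using nondeg_smin[OF nd bs' psi psimin i'(1)] i' by simp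
    have s2: "smin n A b (\<phi> k) k" using nondeg_smin[OF nd bs phi phimin k(1)] .
    have "i' = k" using smin_unique[OF s1 s2] .
    then have "\<phi> k = j" using i' k by simp
    moreover have "\<phi> k \<in> B" using phi k unfolding bij_betw_def by auto
    ultimately show False using jB by simp
  qed
  have pkB: "\<phi> k \<in> B" using phi k unfolding bij_betw_def by auto
  have S: "B' \<subseteq> insert j (B - {\<phi> k})" using sub notin by auto
  have "card (insert j (B - {\<phi> k})) = n" using finB cB pkB jB k
    by (simp add: card_Diff_singleton)
  then have "B' = insert j (B - {\<phi> k})"
    using card_subset_eq[OF _ S] finB cB' by auto
  then show ?thesis using sk by blast
qed

theorem lemma4p2:
  fixes n d :: nat and A :: "nat \<Rightarrow> nat \<Rightarrow> ereal" and b :: "nat \<Rightarrow> ereal"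
    and B :: "nat set" and j :: nat
  assumes A_trop: "\<forall>i<n. \<forall>l<d. is_tropical (A i l)"
    and b_trop: "\<forall>i<n. is_tropical (b i)"
    and basis: "trop_basis n d A b B"
    and j: "j < d" "j \<notin> B"
    and col: "\<exists>i<n. A i j \<noteq> -\<infinity>"
  shows "(\<exists>B'. B' \<subseteq> B \<union> {j} \<and> B' \<noteq> B \<and> trop_basis n d A b B') \<and>
         (nondeg_instance n d A b \<longrightarrow>
            (\<exists>!B'. B' \<subseteq> B \<union> {j} \<and> B' \<noteq> B \<and> trop_basis n d A b B'))"
proof -
  obtain \<phi> where phi: "bij_betw \<phi> {..<n} B"
    and phit: "\<forall>i<n. is_tropical (tsub (b i) (A i (\<phi> i)))"
    and phimin: "\<forall>i<n. \<forall>k<n. tsub (b i) (A i (\<phi> i)) \<le> tsub (b k) (A k (\<phi> i))"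
    using basis unfolding trop_basis_def by blast
  have Bd: "B \<subseteq> {..<d}" and cB: "card B = n" using basis unfolding trop_basis_def by auto
  have finB: "finite B" using Bd finite_subset by blast
  obtain i1 where i1: "i1 < n" "A i1 j \<noteq> -\<infinity>" using col by blast
  define f where "f k = tsub (b k) (A k j)" for k
  define m where "m = Min (f ` {..<n})"
  have ne: "f ` {..<n} \<noteq> {}" using i1 by auto
  have "m \<in> f ` {..<n}" unfolding m_def using ne by (intro Min_in) auto
  then obtain i0 where i0: "i0 < n" "f i0 = m" by auto
  have mle: "\<forall>k<n. m \<le> f k" unfolding m_def by auto
  have "f i1 \<noteq> \<infinity>" unfolding f_def using A_trop b_trop i1 j
    by (intro tsub_not_inf) (auto simp: is_tropical_def)
  then have fi0: "f i0 \<noteq> \<infinity>" using mle i1 i0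
    by (metis ereal_infty_less_eq(1))
  define B' where "B' = insert j (B - {\<phi> i0})"
  define \<psi> where "\<psi> = \<phi>(i0 := j)"
  have pB: "\<phi> i0 \<in> B" using phi i0 unfolding bij_betw_def by auto
  have bij': "bij_betw \<psi> {..<n} B'"
    unfolding bij_betw_def
  proof
    show "inj_on \<psi> {..<n}"
      unfolding inj_on_def \<psi>_def
    proof (intro ballI impI)
      fix x y assume x: "x \<in> {..<n}" and y: "y \<in> {..<n}" and e: "(\<phi>(i0 := j)) x = (\<phi>(i0 := j)) y"
      have "\<phi> x \<in> B" "\<phi> y \<in> B" using phi x y unfolding bij_betw_def by auto
      then show "x = y" using e j(2) phi x y unfolding bij_betw_def inj_on_def
        by (auto split: if_splits)
    qed
    show "\<psi> ` {..<n} = B'"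
    proof -
      have "\<phi> ` {..<n} = B" using phi unfolding bij_betw_def by auto
      moreover have "\<phi> ` ({..<n} - {i0}) = B - {\<phi> i0}"
        using phi i0 unfolding bij_betw_def inj_on_def by auto
      ultimately show ?thesis unfolding \<psi>_def B'_def using i0
        by (auto simp: image_iff) 
    qed
  qed
  have basis': "trop_basis n d A b B'"
    unfolding trop_basis_def
  proof (intro conjI exI[of _ \<psi>])
    show "B' \<subseteq> {..<d}" using Bd j unfolding B'_def by auto
    show "card B' = n" unfolding B'_def using finB cB pB j(2) i0
      by (simp add: card_Diff_singleton)
    show "bij_betw \<psi> {..<n} B'" by (rule bij')
    show "\<forall>i<n. is_tropical (tsub (b i) (A i (\<psi> i))) \<and>
        (\<forall>k<n. tsub (b i) (A i (\<psi> i)) \<le> tsub (b k) (A k (\<psi> i)))"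
      using phit phimin fi0 mle i0 unfolding \<psi>_def f_def is_tropical_def by auto
  qed
  have ex: "B' \<subseteq> B \<union> {j} \<and> B' \<noteq> B \<and> trop_basis n d A b B'"
    using basis' j unfolding B'_def by auto
  show ?thesis
  proof (intro conjI impI)
    show "\<exists>B'. B' \<subseteq> B \<union> {j} \<and> B' \<noteq> B \<and> trop_basis n d A b B'" using ex by blast
    assume nd: "nondeg_instance n d A b"
    show "\<exists>!B'. B' \<subseteq> B \<union> {j} \<and> B' \<noteq> B \<and> trop_basis n d A b B'"
    proof (rule ex1I[of _ B'])
      show "B' \<subseteq> B \<union> {j} \<and> B' \<noteq> B \<and> trop_basis n d A b B'" by (rule ex)
      fix C assume C: "C \<subseteq> B \<union> {j} \<and> C \<noteq> B \<and> trop_basis n d A b C"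
      obtain k1 where k1: "smin n A b j k1" "C = insert j (B - {\<phi> k1})"
        using uniq_form[OF nd basis _ _ _ j(2) phi phimin] C by blast
      obtain k2 where k2: "smin n A b j k2" "B' = insert j (B - {\<phi> k2})"
        using uniq_form[OF nd basis _ _ _ j(2) phi phimin] ex by blast
      show "C = B'" using k1 k2 smin_unique by metis
    qed
  qed
qed

end
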